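(* Let $n\ge1$ be an integer, let $S_n$ be the sum of $n$ independent random variables each uniformly distributed on $[0,1]$, and let $p\ge 1$ be a real number. Then for every integer $k$, $$\Pr\Big(S_n\in \tfrac1p+[k-1,k]\Big)=\frac{1}{p^n\,n!}\,A^{(p)}(n,k).$$
   Context: For real $p\ge1$, integer $n\ge0$ and $0\le j\le n+1$, $A^{(p)}(n,j)=\sum_{r=0}^{j}(-1)^r\binom{n+1}{r}[p(j-r)+1]^{n}$; by convention $A^{(p)}(n,j)=0$ for $j<0$ and for $j>n+1$. Here $\tfrac1p+[k-1,k]$ denotes the interval $[\tfrac1p+k-1,\tfrac1p+k]$. *)

theory Defs
  imports "HOL-Probability.Probability"
begin

definition A :: "real \<Rightarrow> nat \<Rightarrow> int \<Rightarrow> real" where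
  "A p n j = (if j < 0 \<or> j > int n + 1 then 0
     else (\<Sum>r = 0..nat j. (-1) ^ r * real (Suc n choose r)
              * (p * real_of_int (j - int r) + 1) ^ n))"

end

theory Submission
  imports Defs
begin

lemma integral_pospart:
  fixes c :: real and m :: nat
  assumes m: "m \<ge> 1"
  shows "((\<lambda>t. (max (c - t) 0)^m) has_integral ((max c 0)^(Suc m) - (max (c-1) 0)^(Suc m)) / real (Suc m)) {0..1}"
proof -
  define G where "G t = -((max (c - t) 0)^(Suc m)) / real (Suc m)" for t :: real
  have "((\<lambda>t. (max (c - t) 0)^m) has_integral (G 1 - G 0)) {0..1}"
  proof (rule fundamental_theorem_of_calculus_interior_strong[where S="{c}"])
    show "continuous_on {0..1} G" unfolding G_def by (intro continuous_intros) auto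
    fix x assume x: "x \<in> {0<..<1} - {c}"
    show "(G has_vector_derivative (max (c - x) 0)^m) (at x)"
      unfolding has_real_derivative_iff_has_vector_derivative[symmetric]
    proof (cases "x < c")
      case True
      have d: "((\<lambda>t. -((c - t)^(Suc m)) / real (Suc m)) has_real_derivative (c - x)^m) (at x)"
        apply (rule derivative_eq_intros refl)+
        apply (simp only: diff_Suc_1)
        apply (simp add: of_nat_Suc[symmetric] del: of_nat_Suc)
        done
      have e: "(max (c - x) 0)^m = (c - x)^m" using True by simp
      show "(G has_real_derivative (max (c - x) 0)^m) (at x)"
        unfolding e using True by (intro has_field_derivative_transform_within_open[OF d, of "{..<c}"]) (auto simp: G_def)
    next
      case False
      with x have "x > c" by auto
      have d: "((\<lambda>t. 0) has_real_derivative 0) (at x)" by simp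
      have e: "(max (c - x) 0)^m = 0" using \<open>x > c\<close> m by simp
      show "(G has_real_derivative (max (c - x) 0)^m) (at x)"
        unfolding e using \<open>x > c\<close> by (intro has_field_derivative_transform_within_open[OF d, of "{c<..}"]) (auto simp: G_def)
    qed
  qed auto
  moreover have "G 1 - G 0 = ((max c 0)^(Suc m) - (max (c-1) 0)^(Suc m)) / real (Suc m)"
    unfolding G_def by (simp add: diff_divide_distrib)
  ultimately show ?thesis by simp
qed

lemma binom_shift:
  fixes f :: "nat \<Rightarrow> real"
  shows "(\<Sum>r\<le>Suc n. (-1)^r * real (Suc n choose r) * f r)
       = (\<Sum>r\<le>n. (-1)^r * real (n choose r) * (f r - f (Suc r)))"
proof -
  define T where "T r = (-1)^r * real (n choose r) * f r" for r
  have s1: "(\<Sum>r\<le>Suc n. T r) = (\<Sum>r\<le>n. T r)"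
    by (simp add: T_def)
  have T0: "T 0 = f 0" by (simp add: T_def)
  have s2: "(\<Sum>r\<le>Suc n. T r) = T 0 + (\<Sum>r\<le>n. T (Suc r))"
    by (rule sum.atMost_Suc_shift)
  have "(\<Sum>r\<le>Suc n. (-1)^r * real (Suc n choose r) * f r)
      = f 0 + (\<Sum>r\<le>n. (-1)^(Suc r) * real (Suc n choose Suc r) * f (Suc r))"
    by (subst sum.atMost_Suc_shift) simp
  also have "\<dots> = f 0 + (\<Sum>r\<le>n. T (Suc r) - (-1)^r * real (n choose r) * f (Suc r))"
    by (intro arg_cong2[where f="(+)"] refl sum.cong) (auto simp: T_def algebra_simps)
  also have "\<dots> = f 0 + (\<Sum>r\<le>n. T (Suc r)) - (\<Sum>r\<le>n. (-1)^r * real (n choose r) * f (Suc r))"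
    by (simp add: sum_subtractf)
  also have "\<dots> = (\<Sum>r\<le>n. T r) - (\<Sum>r\<le>n. (-1)^r * real (n choose r) * f (Suc r))"
    using s1 s2 T0 by linarith
  also have "\<dots> = (\<Sum>r\<le>n. (-1)^r * real (n choose r) * (f r - f (Suc r)))"
    by (simp add: T_def sum_subtractf[symmetric] algebra_simps)
  finally show ?thesis .
qed

definition Fd :: "nat \<Rightarrow> real \<Rightarrow> real" where
  "Fd n x = (\<Sum>r\<le>n. (-1)^r * real (n choose r) * (max (x - real r) 0)^n) / fact n"

lemma Fd_1: "Fd 1 x = max x 0 - max (x - 1) 0"
  by (simp add: Fd_def)

lemma Fd_step:
  assumes "n \<ge> 1"
  shows "((\<lambda>t. Fd n (x - t)) has_integral Fd (Suc n) x) {0..1}"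
proof -
  have "((\<lambda>t. (\<Sum>r\<le>n. (-1)^r * real (n choose r) * (max ((x - real r) - t) 0)^n) / fact n)
     has_integral (\<Sum>r\<le>n. (-1)^r * real (n choose r) *
        (((max (x - real r) 0)^(Suc n) - (max ((x - real r)-1) 0)^(Suc n)) / real (Suc n))) / fact n) {0..1}"
    by (intro has_integral_divide has_integral_sum has_integral_mult_right integral_pospart assms) auto
  moreover have "(\<lambda>t. (\<Sum>r\<le>n. (-1)^r * real (n choose r) * (max ((x - real r) - t) 0)^n) / fact n)
     = (\<lambda>t. Fd n (x - t))"
    by (auto simp: Fd_def algebra_simps)
  moreover have "(\<Sum>r\<le>n. (-1)^r * real (n choose r) *
        (((max (x - real r) 0)^(Suc n) - (max ((x - real r)-1) 0)^(Suc n)) / real (Suc n))) / fact n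
     = Fd (Suc n) x"
  proof -
    have "(\<Sum>r\<le>n. (-1)^r * real (n choose r) *
        (((max (x - real r) 0)^(Suc n) - (max ((x - real r)-1) 0)^(Suc n)) / real (Suc n)))
      = (\<Sum>r\<le>n. (-1)^r * real (n choose r) *
        ((max (x - real r) 0)^(Suc n) - (max (x - real (Suc r)) 0)^(Suc n))) / real (Suc n)"
      by (simp add: sum_divide_distrib algebra_simps)
    also have "\<dots> = (\<Sum>r\<le>Suc n. (-1)^r * real (Suc n choose r) * (max (x - real r) 0)^(Suc n)) / real (Suc n)"
      by (subst binom_shift[where f="\<lambda>r. (max (x - real r) 0)^(Suc n)"]) simp
    finally have e: "(\<Sum>r\<le>n. (-1)^r * real (n choose r) *
        (((max (x - real r) 0)^(Suc n) - (max ((x - real r)-1) 0)^(Suc n)) / real (Suc n)))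
      = (\<Sum>r\<le>Suc n. (-1)^r * real (Suc n choose r) * (max (x - real r) 0)^(Suc n)) / real (Suc n)" .
    have g: "\<And>S::real. S / real (Suc n) / fact n = S / fact (Suc n)"
      by (simp add: fact_Suc divide_divide_eq_left mult.commute)
    show ?thesis unfolding e g Fd_def ..
  qed
  ultimately show ?thesis by simp
qed

lemma Fd_measurable[measurable]: "Fd m \<in> borel_measurable borel"
  unfolding Fd_def by measurable

lemma conv_step:
  fixes N :: "real measure" and B :: "real \<Rightarrow> real set"
  assumes N: "prob_space N" "sets N = sets borel" and m: "m \<ge> 1"
   and FN: "\<And>y. measure N (B y) = Fd m y" and Bm: "\<And>y. B y \<in> sets borel"
   and Bsh: "\<And>t a. (a + t \<in> B x) = (a \<in> B (x - t))"
  shows "measure (uniform_measure lborel {0..1} \<star> N) (B x) = Fd (Suc m) x"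
proof -
  let ?U = "uniform_measure lborel {0..1::real}"
  interpret U: prob_space ?U by (rule prob_space_uniform_measure) auto
  interpret N: prob_space N by fact
  have spN: "space N = space borel" using N(2) by (rule sets_eq_imp_space_eq)
  have nn: "\<And>y. Fd m y \<ge> 0" using FN measure_nonneg by metis
  have "emeasure (?U \<star> N) (B x) = \<integral>\<^sup>+t. emeasure N {a. a + t \<in> B x} \<partial>?U"
    by (rule convolution_emeasure) (auto simp: Bm N(2) spN U.finite_measure_axioms N.finite_measure_axioms)
  also have "\<dots> = \<integral>\<^sup>+t. ennreal (Fd m (x - t)) \<partial>?U"
  proof (rule nn_integral_cong)
    fix t
    have "{a. a + t \<in> B x} = B (x - t)" using Bsh by auto
    then show "emeasure N {a. a + t \<in> B x} = ennreal (Fd m (x - t))"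
      using N.emeasure_eq_measure FN by simp
  qed
  also have "\<dots> = (\<integral>\<^sup>+t. ennreal (Fd m (x - t)) * indicator {0..1} t \<partial>lborel) / emeasure lborel {0..1::real}"
    by (rule nn_integral_uniform_measure) auto
  also have "\<dots> = ennreal (Fd (Suc m) x)"
    using nn_integral_has_integral_lebesgue'[OF _ Fd_step[OF m, of x]] nn by (simp add: divide_ennreal_def)
  finally have "emeasure (?U \<star> N) (B x) = ennreal (Fd (Suc m) x)" .
  moreover have "Fd (Suc m) x \<ge> 0"
    using has_integral_nonneg[OF Fd_step[OF m, of x]] nn by auto
  ultimately show ?thesis by (simp add: measure_def)
qed

lemma unif_base:
  shows "measure (uniform_measure lborel {0..1::real}) {..x} = Fd 1 x"
    and "measure (uniform_measure lborel {0..1::real}) {..<x} = Fd 1 x"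
proof -
  have a: "measure lborel ({0..1::real} \<inter> {..x}) = max x 0 - max (x - 1) 0"
  proof (cases "x < 0")
    case True then have "{0..1::real} \<inter> {..x} = {}" by auto
    then show ?thesis using True by simp
  next
    case False
    show ?thesis
    proof (cases "x \<le> 1")
      case True then have "{0..1::real} \<inter> {..x} = {0..x}" by auto
      then show ?thesis using True False by simp
    next
      case False then have "{0..1::real} \<inter> {..x} = {0..1}" by auto
      then show ?thesis using False by simp
    qed
  qed
  have b: "measure lborel ({0..1::real} \<inter> {..<x}) = max x 0 - max (x - 1) 0"
  proof (cases "x \<le> 0")
    case True then have "{0..1::real} \<inter> {..<x} = {}" by auto
    then show ?thesis using True by simp
  next
    case False
    show ?thesis
    proof (cases "x \<le> 1")
      case True then have "{0..1::real} \<inter> {..<x} = {0..<x}" by auto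
      then show ?thesis using True False by simp
    next
      case False then have "{0..1::real} \<inter> {..<x} = {0..1}" by auto
      then show ?thesis using False by simp
    qed
  qed
  show "measure (uniform_measure lborel {0..1::real}) {..x} = Fd 1 x"
    unfolding Fd_1 using a by (subst measure_uniform_measure) auto
  show "measure (uniform_measure lborel {0..1::real}) {..<x} = Fd 1 x"
    unfolding Fd_1 using b by (subst measure_uniform_measure) auto
qed

lemma sum_cdf:
  fixes M :: "'a measure" and X :: "nat \<Rightarrow> 'a \<Rightarrow> real"
  assumes P: "prob_space M" and Xm: "\<And>i. i < n \<Longrightarrow> X i \<in> borel_measurable M"
    and ind: "prob_space.indep_vars M (\<lambda>_. borel) X {..<n}"
    and U: "\<And>i. i < n \<Longrightarrow> distr M lborel (X i) = uniform_measure lborel {0..1}"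
    and m: "1 \<le> m" "m \<le> n"
  shows "\<forall>x. measure (distr M lborel (\<lambda>\<omega>. \<Sum>i<m. X i \<omega>)) {..x} = Fd m x
            \<and> measure (distr M lborel (\<lambda>\<omega>. \<Sum>i<m. X i \<omega>)) {..<x} = Fd m x"
  using m(1) m(2)
proof (induction m rule: dec_induct)
  case base
  have "(\<lambda>\<omega>. \<Sum>i<1. X i \<omega>) = X 0" by simp
  then show ?case using U[of 0] base unif_base by simp
next
  case (step k)
  interpret prob_space M by fact
  have kn: "k < n" using step by simp
  have Xk[measurable]: "X k \<in> borel_measurable M" using Xm kn by simp
  have Xi[measurable]: "\<And>i. i < k \<Longrightarrow> X i \<in> borel_measurable M" using Xm kn by simp
  have Sk[measurable]: "(\<lambda>\<omega>. \<Sum>i<k. X i \<omega>) \<in> borel_measurable M"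
    by (intro borel_measurable_sum) (use Xi in auto)
  have iv: "indep_var borel (X k) borel (\<lambda>\<omega>. \<Sum>i\<in>{..<k}. X i \<omega>)"
    by (rule indep_vars_sum) (use kn in \<open>auto intro!: indep_vars_subset[OF ind]\<close>)
  have "distr M lborel (\<lambda>\<omega>. \<Sum>i<Suc k. X i \<omega>) = distr M lborel (\<lambda>\<omega>. X k \<omega> + (\<Sum>i<k. X i \<omega>))"
    by (simp add: add.commute)
  also have "\<dots> = (distr M lborel (X k) \<star> distr M lborel (\<lambda>\<omega>. \<Sum>i<k. X i \<omega>))"
    by (rule sum_indep_random_variable_lborel[OF iv]) auto
  also have "\<dots> = (uniform_measure lborel {0..1} \<star> distr M lborel (\<lambda>\<omega>. \<Sum>i<k. X i \<omega>))"
    using U kn by simp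
  finally have D: "distr M lborel (\<lambda>\<omega>. \<Sum>i<Suc k. X i \<omega>) = (uniform_measure lborel {0..1} \<star> distr M lborel (\<lambda>\<omega>. \<Sum>i<k. X i \<omega>))" .
  have pd: "prob_space (distr M lborel (\<lambda>\<omega>. \<Sum>i<k. X i \<omega>))"
    by (rule prob_space_distr) simp
  show ?case
  proof
    fix x
    show "measure (distr M lborel (\<lambda>\<omega>. \<Sum>i<Suc k. X i \<omega>)) {..x} = Fd (Suc k) x
       \<and> measure (distr M lborel (\<lambda>\<omega>. \<Sum>i<Suc k. X i \<omega>)) {..<x} = Fd (Suc k) x"
      unfolding D
      using step.IH kn step.hyps
      by (intro conjI conv_step[OF pd]) auto
  qed
qed

lemma Fd_A:
  fixes p :: real and k :: int
  assumes n: "n \<ge> 1" and p: "p \<ge> 1" and k: "k \<le> int n + 1"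
  shows "Fd n (1/p + real_of_int k) - Fd n (1/p + real_of_int k - 1) = 1 / (p ^ n * fact n) * A p n k"
proof -
  define a where "a = 1/p + real_of_int k"
  define h where "h r = (-1)^r * real (Suc n choose r) * (max (a - real r) 0)^n" for r
  have p0: "p > 0" using p by simp
  have ip: "1/p \<le> 1" "1/p > 0" using p by auto
  have "Fd n a - Fd n (a - 1) = (\<Sum>r\<le>n. (-1)^r * real (n choose r) * ((max (a - real r) 0)^n - (max (a - real (Suc r)) 0)^n)) / fact n"
    unfolding Fd_def by (simp add: diff_divide_distrib[symmetric] sum_subtractf[symmetric] algebra_simps)
  also have "\<dots> = (\<Sum>r\<le>Suc n. h r) / fact n"
    unfolding h_def by (subst binom_shift[where f="\<lambda>r. (max (a - real r) 0)^n"]) simp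
  finally have e1: "Fd n a - Fd n (a - 1) = (\<Sum>r\<le>Suc n. h r) / fact n" .
  show ?thesis
  proof (cases "k < 0")
    case True
    have "h r = 0" for r
    proof -
      have "a - real r \<le> 0" using True ip unfolding a_def by linarith
      then show ?thesis using n by (simp add: h_def)
    qed
    then show ?thesis using e1 True unfolding a_def A_def by simp
  next
    case False
    have "(\<Sum>r\<le>Suc n. h r) = (\<Sum>r\<in>{0..nat k}. h r)"
    proof (rule sum.mono_neutral_right)
      show "{0..nat k} \<subseteq> {..Suc n}" using k by auto
      show "\<forall>r\<in>{..Suc n} - {0..nat k}. h r = 0"
      proof
        fix r assume "r \<in> {..Suc n} - {0..nat k}"
        then have "int r \<ge> k + 1" using False by auto
        then have "a - real r \<le> 0" using ip unfolding a_def by linarith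
        then show "h r = 0" using n by (simp add: h_def)
      qed
    qed simp
    also have "\<dots> = (\<Sum>r\<in>{0..nat k}. (-1)^r * real (Suc n choose r) * (p * real_of_int (k - int r) + 1)^n) / p^n"
      unfolding sum_divide_distrib
    proof (rule sum.cong)
      fix r assume "r \<in> {0..nat k}"
      then have "int r \<le> k" using False by auto
      then have "a - real r > 0" using ip unfolding a_def by linarith
      moreover have "a - real r = (p * real_of_int (k - int r) + 1) / p"
        unfolding a_def using p0 by (simp add: field_simps)
      ultimately show "h r = (-1)^r * real (Suc n choose r) * (p * real_of_int (k - int r) + 1)^n / p^n"
        unfolding h_def by (simp add: power_divide)
    qed simp
    finally show ?thesis using e1 False k unfolding a_def A_def by simp
  qed
qed

theorem corollary1:
  fixes M :: "'a measure" and X :: "nat \<Rightarrow> 'a \<Rightarrow> real"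
    and n :: nat and p :: real and k :: int
  assumes "prob_space M"
    and "n \<ge> 1"
    and "\<And>i. i < n \<Longrightarrow> X i \<in> borel_measurable M"
    and "prob_space.indep_vars M (\<lambda>_. borel) X {..<n}"
    and "\<And>i. i < n \<Longrightarrow> distr M lborel (X i) = uniform_measure lborel {0..1}"
    and "p \<ge> 1"
  shows "measure M {\<omega> \<in> space M. (\<Sum>i<n. X i \<omega>) \<in> {1/p + real_of_int k - 1 .. 1/p + real_of_int k}}
           = 1 / (p ^ n * fact n) * A p n k"
proof -
  interpret prob_space M by fact
  have Xm[measurable]: "\<And>i. i < n \<Longrightarrow> X i \<in> borel_measurable M" by fact
  have Sm[measurable]: "(\<lambda>\<omega>. \<Sum>i<n. X i \<omega>) \<in> borel_measurable M"
    by (intro borel_measurable_sum) (use Xm in auto)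
  define a where "a = 1/p + real_of_int k"
  have ip: "1/p \<le> 1" "1/p > 0" using assms(6) by auto
  show ?thesis
  proof (cases "k \<le> int n + 1")
    case True
    let ?D = "distr M lborel (\<lambda>\<omega>. \<Sum>i<n. X i \<omega>)"
    interpret D: prob_space ?D by (rule prob_space_distr) simp
    note cdf = sum_cdf[OF assms(1,3,4,5) assms(2) order_refl]
    have "measure M {\<omega> \<in> space M. (\<Sum>i<n. X i \<omega>) \<in> {a - 1 .. a}} = measure ?D {a - 1 .. a}"
      by (subst measure_distr) (auto intro!: arg_cong[where f="measure M"])
    also have "\<dots> = measure ?D ({..a} - {..<a-1})" by (rule arg_cong[where f="measure ?D"]) auto
    also have "\<dots> = measure ?D {..a} - measure ?D {..<a-1}"
      by (rule D.finite_measure_Diff) auto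
    also have "\<dots> = Fd n a - Fd n (a - 1)" using cdf by simp
    also have "\<dots> = 1 / (p ^ n * fact n) * A p n k"
      unfolding a_def by (rule Fd_A[OF assms(2,6) True])
    finally show ?thesis unfolding a_def .
  next
    case False
    have A0: "A p n k = 0" using False by (simp add: A_def)
    have sub: "{\<omega> \<in> space M. (\<Sum>i<n. X i \<omega>) \<in> {a - 1 .. a}} \<subseteq> (\<Union>i<n. {\<omega> \<in> space M. X i \<omega> > 1})"
    proof
      fix \<omega> assume w: "\<omega> \<in> {\<omega> \<in> space M. (\<Sum>i<n. X i \<omega>) \<in> {a - 1 .. a}}"
      show "\<omega> \<in> (\<Union>i<n. {\<omega> \<in> space M. X i \<omega> > 1})"
      proof (rule ccontr)
        assume "\<omega> \<notin> (\<Union>i<n. {\<omega> \<in> space M. X i \<omega> > 1})"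
        then have "\<forall>i<n. X i \<omega> \<le> 1" using w by (auto simp: not_less)
        then have "(\<Sum>i<n. X i \<omega>) \<le> (\<Sum>i<n. 1)" by (intro sum_mono) auto
        then have "(\<Sum>i<n. X i \<omega>) \<le> real n" by simp
        moreover have "a - 1 > real n" using False ip unfolding a_def by linarith
        ultimately show False using w by auto
      qed
    qed
    have z: "measure M {\<omega> \<in> space M. X i \<omega> > 1} = 0" if i: "i < n" for i
    proof -
      have "measure M {\<omega> \<in> space M. X i \<omega> > 1} = measure (distr M lborel (X i)) {1<..}"
        using i by (subst measure_distr) (auto intro!: arg_cong[where f="measure M"])
      also have "\<dots> = measure (uniform_measure lborel {0..1::real}) {1<..}" using assms(5) i by simp
      also have "\<dots> = 0"
      proof -
        have "{0..1::real} \<inter> {1<..} = {}" by auto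
        then show ?thesis by (subst measure_uniform_measure) auto
      qed
      finally show ?thesis .
    qed
    have "measure M {\<omega> \<in> space M. (\<Sum>i<n. X i \<omega>) \<in> {a - 1 .. a}} \<le> measure M (\<Union>i<n. {\<omega> \<in> space M. X i \<omega> > 1})"
      by (rule finite_measure_mono[OF sub]) auto
    also have "\<dots> \<le> (\<Sum>i<n. measure M {\<omega> \<in> space M. X i \<omega> > 1})"
      by (rule finite_measure_subadditive_finite) auto
    also have "\<dots> = 0" using z by simp
    finally have "measure M {\<omega> \<in> space M. (\<Sum>i<n. X i \<omega>) \<in> {a - 1 .. a}} = 0"
      using measure_nonneg by (meson antisym)
    then show ?thesis using A0 unfolding a_def by simp
  qed
qed

end
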